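(* For every compact subset $K\subset\partial^2\Gamma$ there exists a constant $C$ with the following property. Suppose $\xi,\eta,\eta'\in\partial\Gamma$ and $g\in\Gamma$ satisfy $(\xi,\eta)\in K$, $(\xi,\eta')\in K$, $(g\xi,g\eta)\in K$, and $\sigma(g,\xi)<0$. Put $t=-\sigma(g,\xi)>0$. Then $\sigma(g,\eta)\in[t-C,t+C]$, $\sigma(g,\eta')\in[t-C,t+C]$, and $d_{\partial\Gamma}(g\eta,g\eta')<\alpha^{t-C}$.
   Context: $\Gamma$ is a countable non-elementary group acting properly and cocompactly by isometries on a proper, Gromov-hyperbolic, quasi-convex metric space $(M,d_M)$ (quasi-convex: any two distinct points of $M\sqcup\partial M$ are joined by a $C_0$-almost-geodesic for a uniform $C_0$). $o\in M$ is a fixed base point. $\partial\Gamma=\partial M$ is the Gromov boundary and $\partial^2\Gamma=\{(\xi,\eta):\xi\ne\eta\}$, with its natural topology. Gromov product. $(x|y)_z=\tfrac12(d_M(x,z)+d_M(y,z)-d_M(x,y))$, extended to boundary points by $(\xi|\eta)_o=\inf\liminf_i(x_i|y_i)_o$ over sequences $x_i\to\xi$, $y_i\to\eta$. Visual metric. $d_{\partial\Gamma}$ is a fixed visual metric on $\partial\Gamma$ of the form $d_{\partial\Gamma}(\xi,\eta)=\alpha^{(\xi|\eta)_o+b(\xi,\eta)}$, where $\alpha\in(0,1)$ is a fixed parameter and $b$ is uniformly bounded. Busemann cocycle. $\sigma(g,\xi)=\limsup_{x\to\xi}(d_M(g^{-1}o,x)-d_M(o,x))$. *)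

theory Defs
  imports "HOL-Analysis.Analysis" "HOL-Algebra.Group_Action"
begin

definition gprod :: "'m::metric_space \<Rightarrow> 'm \<Rightarrow> 'm \<Rightarrow> real" where
  "gprod z x y = (dist x z + dist y z - dist x y) / 2"

definition proper_space :: "'m::metric_space itself \<Rightarrow> bool" where
  "proper_space _ \<longleftrightarrow> (\<forall>(x::'m) r. compact (cball x r))"

definition gromov_hyperbolic :: "'m::metric_space itself \<Rightarrow> bool" where
  "gromov_hyperbolic _ \<longleftrightarrow> (\<exists>\<delta>::real. \<forall>x y z w::'m.
      gprod w x z \<ge> min (gprod w x y) (gprod w y z) - \<delta>)"

definition gromov_seq :: "'m::metric_space \<Rightarrow> (nat \<Rightarrow> 'm) \<Rightarrow> bool" where
  "gromov_seq bp x \<longleftrightarrow> (\<forall>B. \<exists>N. \<forall>i\<ge>N. \<forall>j\<ge>N. gprod bp (x i) (x j) \<ge> B)"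

definition gromov_equiv :: "'m::metric_space \<Rightarrow> (nat \<Rightarrow> 'm) \<Rightarrow> (nat \<Rightarrow> 'm) \<Rightarrow> bool" where
  "gromov_equiv bp x y \<longleftrightarrow> (\<forall>B. \<exists>N. \<forall>i\<ge>N. gprod bp (x i) (y i) \<ge> B)"

text \<open>A boundary point is the class of all sequences converging to it; in particular
  a sequence x converges to the boundary point xi iff x belongs to xi.\<close>
definition gboundary :: "'m::metric_space \<Rightarrow> (nat \<Rightarrow> 'm) set set" where
  "gboundary bp = {{y. gromov_seq bp y \<and> gromov_equiv bp x y} | x. gromov_seq bp x}"

definition gprod_bd :: "'m::metric_space \<Rightarrow> (nat \<Rightarrow> 'm) set \<Rightarrow> (nat \<Rightarrow> 'm) set \<Rightarrow> ereal" where
  "gprod_bd bp \<xi> \<eta> = Inf {liminf (\<lambda>i. ereal (gprod bp (x i) (y i))) | x y. x \<in> \<xi> \<and> y \<in> \<eta>}"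

definition almost_geodesic_on :: "real \<Rightarrow> real set \<Rightarrow> (real \<Rightarrow> 'm::metric_space) \<Rightarrow> bool" where
  "almost_geodesic_on C I c \<longleftrightarrow> (\<forall>s\<in>I. \<forall>t\<in>I.
      \<bar>s - t\<bar> - C \<le> dist (c s) (c t) \<and> dist (c s) (c t) \<le> \<bar>s - t\<bar> + C)"

definition ends_at_top :: "(real \<Rightarrow> 'm::metric_space) \<Rightarrow> (nat \<Rightarrow> 'm) set \<Rightarrow> bool" where
  "ends_at_top c \<xi> \<longleftrightarrow> (\<forall>s. filterlim s at_top sequentially \<longrightarrow> (c \<circ> s) \<in> \<xi>)"

definition ends_at_bot :: "(real \<Rightarrow> 'm::metric_space) \<Rightarrow> (nat \<Rightarrow> 'm) set \<Rightarrow> bool" where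
  "ends_at_bot c \<xi> \<longleftrightarrow> (\<forall>s. filterlim s at_bot sequentially \<longrightarrow> (c \<circ> s) \<in> \<xi>)"

definition quasi_convex :: "'m::metric_space \<Rightarrow> bool" where
  "quasi_convex bp \<longleftrightarrow> (\<exists>C0::real.
     (\<forall>x y::'m. x \<noteq> y \<longrightarrow> (\<exists>c a b. a \<le> b \<and> almost_geodesic_on C0 {a..b} c \<and> c a = x \<and> c b = y)) \<and>
     (\<forall>x::'m. \<forall>\<xi>\<in>gboundary bp. \<exists>c a. almost_geodesic_on C0 {a..} c \<and> c a = x \<and> ends_at_top c \<xi>) \<and>
     (\<forall>\<xi>\<in>gboundary bp. \<forall>\<eta>\<in>gboundary bp. \<xi> \<noteq> \<eta> \<longrightarrow>
        (\<exists>c. almost_geodesic_on C0 UNIV c \<and> ends_at_bot c \<xi> \<and> ends_at_top c \<eta>)))"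

definition isometric_action :: "('g, 'b) monoid_scheme \<Rightarrow> ('g \<Rightarrow> 'm::metric_space \<Rightarrow> 'm) \<Rightarrow> bool" where
  "isometric_action G \<phi> \<longleftrightarrow> group_action G UNIV \<phi> \<and>
     (\<forall>g\<in>carrier G. \<forall>x y. dist (\<phi> g x) (\<phi> g y) = dist x y)"

definition properly_acting :: "('g, 'b) monoid_scheme \<Rightarrow> ('g \<Rightarrow> 'm::metric_space \<Rightarrow> 'm) \<Rightarrow> bool" where
  "properly_acting G \<phi> \<longleftrightarrow> (\<forall>K. compact K \<longrightarrow> finite {g\<in>carrier G. \<phi> g ` K \<inter> K \<noteq> {}})"

definition cocompact_action :: "('g, 'b) monoid_scheme \<Rightarrow> ('g \<Rightarrow> 'm::metric_space \<Rightarrow> 'm) \<Rightarrow> bool" where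
  "cocompact_action G \<phi> \<longleftrightarrow> (\<exists>K. compact K \<and> (\<Union>g\<in>carrier G. \<phi> g ` K) = UNIV)"

definition bd_act :: "('g \<Rightarrow> 'm \<Rightarrow> 'm) \<Rightarrow> 'g \<Rightarrow> (nat \<Rightarrow> 'm) set \<Rightarrow> (nat \<Rightarrow> 'm) set" where
  "bd_act \<phi> g \<xi> = (\<lambda>x. \<phi> g \<circ> x) ` \<xi>"

text \<open>Busemann cocycle sigma(g,xi) = limsup_{x\<rightarrow>xi} (d(g^-1 bp, x) - d(bp, x)),
  the limsup computed as the sup over sequences converging to xi (it is finite,
  bounded by d(bp, g^-1 bp)).\<close>
definition busemann :: "('g, 'b) monoid_scheme \<Rightarrow> ('g \<Rightarrow> 'm::metric_space \<Rightarrow> 'm) \<Rightarrow> 'm \<Rightarrow> 'g \<Rightarrow> (nat \<Rightarrow> 'm) set \<Rightarrow> real" where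
  "busemann G \<phi> bp g \<xi> = real_of_ereal (Sup {limsup (\<lambda>i. ereal (dist (\<phi> (inv\<^bsub>G\<^esub> g) bp) (x i) - dist bp (x i))) | x. x \<in> \<xi>})"

definition visual_metric :: "'m::metric_space \<Rightarrow> real \<Rightarrow> ((nat \<Rightarrow> 'm) set \<Rightarrow> (nat \<Rightarrow> 'm) set \<Rightarrow> real) \<Rightarrow> bool" where
  "visual_metric bp \<alpha> dB \<longleftrightarrow> 0 < \<alpha> \<and> \<alpha> < 1 \<and> Metric_space (gboundary bp) dB \<and>
     (\<exists>b B. (\<forall>\<xi>\<in>gboundary bp. \<forall>\<eta>\<in>gboundary bp. \<bar>b \<xi> \<eta>\<bar> \<le> B) \<and>
        (\<forall>\<xi>\<in>gboundary bp. \<forall>\<eta>\<in>gboundary bp. \<xi> \<noteq> \<eta> \<longrightarrow>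
           dB \<xi> \<eta> = \<alpha> powr (real_of_ereal (gprod_bd bp \<xi> \<eta>) + b \<xi> \<eta>)))"

end

theory Submission
  imports Defs
begin

lemma gprod_twice: "2 * gprod w x y = dist x w + dist y w - dist x y"
  unfolding gprod_def by simp

lemma gprod_sym: "gprod w x y = gprod w y x"
  unfolding gprod_def by (simp add: dist_commute)

lemma gprod_nonneg: "0 \<le> gprod w x y"
proof -
  have "dist x y \<le> dist x w + dist w y" by (rule dist_triangle)
  moreover have "dist w y = dist y w" by (rule dist_commute)
  ultimately show ?thesis using gprod_twice[of w x y] by linarith
qed

lemma gprod_le: "gprod w x y \<le> dist x w"
proof -
  have "dist y w \<le> dist y x + dist x w" by (rule dist_triangle)
  moreover have "dist y x = dist x y" by (rule dist_commute)
  ultimately show ?thesis using gprod_twice[of w x y] by linarith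
qed

lemma gprod_le2: "gprod w x y \<le> dist y w"
  using gprod_le[of w y x] gprod_sym[of w x y] by simp

lemma gprod_self: "gprod w x x = dist x w"
  unfolding gprod_def by simp

lemma gprod_shift: "\<bar>gprod q x y - gprod w x y\<bar> \<le> dist w q"
proof -
  have "dist x q \<le> dist x w + dist w q" "dist x w \<le> dist x q + dist q w"
       "dist y q \<le> dist y w + dist w q" "dist y w \<le> dist y q + dist q w"
    by (rule dist_triangle)+
  moreover have "dist q w = dist w q" by (rule dist_commute)
  ultimately show ?thesis using gprod_twice[of q x y] gprod_twice[of w x y] by linarith
qed

lemma gprod_base_id:
  "2 * gprod p x y = 2 * gprod w x y + (dist p x - dist w x) + (dist p y - dist w y)"
  using gprod_twice[of p x y] gprod_twice[of w x y] dist_commute[of p x] dist_commute[of w x]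
    dist_commute[of p y] dist_commute[of w y] by linarith

lemma f_id: "dist p z - dist w z = dist w p - 2 * gprod w p z"
  using gprod_twice[of w p z] dist_commute[of p w] dist_commute[of w z] by linarith

lemma f_abs: "\<bar>dist p z - dist w z\<bar> \<le> dist w p"
proof -
  have "dist p z \<le> dist p w + dist w z" "dist w z \<le> dist w p + dist p z"
    by (rule dist_triangle)+
  moreover have "dist p w = dist w p" by (rule dist_commute)
  ultimately show ?thesis by (simp add: abs_le_iff)
qed

definition hyp :: "real \<Rightarrow> 'm::metric_space itself \<Rightarrow> bool" where
  "hyp \<delta> _ \<longleftrightarrow> 0 \<le> \<delta> \<and> (\<forall>x y z w::'m. gprod w x z \<ge> min (gprod w x y) (gprod w y z) - \<delta>)"

lemma hyp_exists: "gromov_hyperbolic TYPE('m::metric_space) \<Longrightarrow> \<exists>\<delta>. hyp \<delta> TYPE('m)"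
proof -
  assume "gromov_hyperbolic TYPE('m)"
  then obtain d :: real where d: "\<forall>x y z w::'m. gprod w x z \<ge> min (gprod w x y) (gprod w y z) - d"
    unfolding gromov_hyperbolic_def by blast
  have "hyp (max d 0) TYPE('m)"
    unfolding hyp_def
  proof (intro conjI allI)
    fix x y z w :: 'm
    have "gprod w x z \<ge> min (gprod w x y) (gprod w y z) - d" using d by blast
    moreover have "d \<le> max d 0" by simp
    ultimately show "gprod w x z \<ge> min (gprod w x y) (gprod w y z) - max d 0" by linarith
  qed simp
  then show ?thesis by blast
qed

lemma hypD: "hyp \<delta> TYPE('m::metric_space) \<Longrightarrow> gprod w x z \<ge> min (gprod w x y) (gprod w y z) - \<delta>"
  for x y z w :: "'m::metric_space"
  unfolding hyp_def by blast

lemma hyp_nonneg: "hyp \<delta> TYPE('m::metric_space) \<Longrightarrow> 0 \<le> \<delta>"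
  unfolding hyp_def by blast


definition cls :: "'m::metric_space \<Rightarrow> (nat \<Rightarrow> 'm) \<Rightarrow> (nat \<Rightarrow> 'm) set" where
  "cls bp x = {y. gromov_seq bp y \<and> gromov_equiv bp x y}"

lemma gboundary_cls: "gboundary bp = {cls bp x | x. gromov_seq bp x}"
  unfolding gboundary_def cls_def by simp

lemma equiv_refl: "gromov_seq bp x \<Longrightarrow> gromov_equiv bp x x"
  unfolding gromov_seq_def gromov_equiv_def
proof (intro allI)
  fix B assume "\<forall>B. \<exists>N. \<forall>i\<ge>N. \<forall>j\<ge>N. B \<le> gprod bp (x i) (x j)"
  then obtain N where "\<forall>i\<ge>N. \<forall>j\<ge>N. B \<le> gprod bp (x i) (x j)" by blast
  then show "\<exists>N. \<forall>i\<ge>N. B \<le> gprod bp (x i) (x i)" by blast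
qed

lemma equiv_sym: "gromov_equiv bp x y \<Longrightarrow> gromov_equiv bp y x"
  unfolding gromov_equiv_def by (simp add: gprod_sym)

lemma cls_mem: "gromov_seq bp z \<Longrightarrow> z \<in> cls bp z"
  unfolding cls_def using equiv_refl by blast

lemma bd_cases: "a \<in> gboundary bp \<Longrightarrow> \<exists>z. gromov_seq bp z \<and> a = cls bp z"
  unfolding gboundary_cls by blast

lemma mem_seq: "a \<in> gboundary bp \<Longrightarrow> x \<in> a \<Longrightarrow> gromov_seq bp x"
  using bd_cases unfolding cls_def by blast

lemma bd_nonempty: "a \<in> gboundary bp \<Longrightarrow> \<exists>x. x \<in> a"
  using bd_cases cls_mem by blast

context
  fixes \<delta> :: real and bp :: "'m::metric_space"
  assumes H: "hyp \<delta> TYPE('m)"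
begin

lemma equiv_trans:
  assumes "gromov_equiv bp x y" "gromov_equiv bp y z"
  shows "gromov_equiv bp x z"
  unfolding gromov_equiv_def
proof
  fix B
  obtain N1 where N1: "\<forall>i\<ge>N1. B + \<delta> \<le> gprod bp (x i) (y i)"
    using assms(1) unfolding gromov_equiv_def by blast
  obtain N2 where N2: "\<forall>i\<ge>N2. B + \<delta> \<le> gprod bp (y i) (z i)"
    using assms(2) unfolding gromov_equiv_def by blast
  have "\<forall>i\<ge>max N1 N2. B \<le> gprod bp (x i) (z i)"
  proof (intro allI impI)
    fix i assume "max N1 N2 \<le> i"
    then have "B + \<delta> \<le> gprod bp (x i) (y i)" "B + \<delta> \<le> gprod bp (y i) (z i)" using N1 N2 by auto
    moreover have "gprod bp (x i) (z i) \<ge> min (gprod bp (x i) (y i)) (gprod bp (y i) (z i)) - \<delta>"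
      using hypD[OF H] by blast
    ultimately show "B \<le> gprod bp (x i) (z i)" by linarith
  qed
  then show "\<exists>N. \<forall>i\<ge>N. B \<le> gprod bp (x i) (z i)" by blast
qed

lemma mem_equiv:
  assumes "a \<in> gboundary bp" "x \<in> a" "x' \<in> a"
  shows "gromov_equiv bp x x'"
proof -
  obtain z where "a = cls bp z" using bd_cases[OF assms(1)] by blast
  then have "gromov_equiv bp z x" "gromov_equiv bp z x'" using assms unfolding cls_def by auto
  then show ?thesis using equiv_trans equiv_sym by blast
qed

lemma mem_cls_eq:
  assumes "a \<in> gboundary bp" "x \<in> a"
  shows "a = cls bp x"
proof -
  obtain z where z: "gromov_seq bp z" "a = cls bp z" using bd_cases[OF assms(1)] by blast
  then have zx: "gromov_equiv bp z x" using assms unfolding cls_def by auto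
  show ?thesis unfolding z(2) cls_def
    using zx equiv_trans equiv_sym by blast
qed

lemma equiv_same_point:
  assumes "a \<in> gboundary bp" "b \<in> gboundary bp" "x \<in> a" "y \<in> b" "gromov_equiv bp x y"
  shows "a = b"
proof -
  have "a = cls bp x" "b = cls bp y" using mem_cls_eq assms by blast+
  then show ?thesis unfolding cls_def using assms(5) equiv_trans equiv_sym by blast
qed

lemma cross:
  assumes "a \<in> gboundary bp" "x \<in> a" "x' \<in> a"
  shows "\<exists>N. \<forall>i\<ge>N. \<forall>j\<ge>N. B \<le> gprod bp (x i) (x' j)"
proof -
  have e: "gromov_equiv bp x x'" using mem_equiv assms by blast
  have s: "gromov_seq bp x'" using mem_seq assms by blast
  obtain N1 where N1: "\<forall>i\<ge>N1. B + \<delta> \<le> gprod bp (x i) (x' i)"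
    using e unfolding gromov_equiv_def by blast
  obtain N2 where N2: "\<forall>i\<ge>N2. \<forall>j\<ge>N2. B + \<delta> \<le> gprod bp (x' i) (x' j)"
    using s unfolding gromov_seq_def by blast
  have "\<forall>i\<ge>max N1 N2. \<forall>j\<ge>max N1 N2. B \<le> gprod bp (x i) (x' j)"
  proof (intro allI impI)
    fix i j assume "max N1 N2 \<le> i" "max N1 N2 \<le> j"
    then have "B + \<delta> \<le> gprod bp (x i) (x' i)" "B + \<delta> \<le> gprod bp (x' i) (x' j)" using N1 N2 by auto
    moreover have "gprod bp (x i) (x' j) \<ge> min (gprod bp (x i) (x' i)) (gprod bp (x' i) (x' j)) - \<delta>"
      using hypD[OF H] by blast
    ultimately show "B \<le> gprod bp (x i) (x' j)" by linarith
  qed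
  then show ?thesis by blast
qed

lemma transfer:
  assumes a: "a \<in> gboundary bp" and b: "b \<in> gboundary bp"
    and x: "x \<in> a" "x' \<in> a" and y: "y \<in> b" "y' \<in> b"
    and fr: "\<forall>N. \<exists>i\<ge>N. gprod bp (x i) (y i) < M"
  shows "\<exists>N. \<forall>j\<ge>N. gprod bp (x' j) (y' j) \<le> M + 2 * \<delta>"
proof -
  obtain N1 where N1: "\<forall>i\<ge>N1. \<forall>j\<ge>N1. M + 2 * \<delta> \<le> gprod bp (x i) (x' j)"
    using cross[OF a x] by blast
  obtain N2 where N2: "\<forall>i\<ge>N2. \<forall>j\<ge>N2. M + 2 * \<delta> \<le> gprod bp (y' i) (y j)"
    using cross[OF b y(2) y(1)] by blast
  have d0: "0 \<le> \<delta>" using hyp_nonneg[OF H] .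
  have "\<forall>j\<ge>max N1 N2. gprod bp (x' j) (y' j) \<le> M + 2 * \<delta>"
  proof (intro allI impI)
    fix j assume j: "max N1 N2 \<le> j"
    show "gprod bp (x' j) (y' j) \<le> M + 2 * \<delta>"
    proof (rule ccontr)
      assume c: "\<not> ?thesis"
      obtain i where i: "i \<ge> max N1 N2" "gprod bp (x i) (y i) < M" using fr by blast
      have g1: "M + 2 * \<delta> \<le> gprod bp (x i) (x' j)" using N1 i j by auto
      have g2: "M + 2 * \<delta> \<le> gprod bp (y' j) (y i)" using N2 i j by auto
      have h1: "gprod bp (x' j) (y i) \<ge> min (gprod bp (x' j) (y' j)) (gprod bp (y' j) (y i)) - \<delta>"
        using hypD[OF H] by blast
      have h2: "gprod bp (x i) (y i) \<ge> min (gprod bp (x i) (x' j)) (gprod bp (x' j) (y i)) - \<delta>"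
        using hypD[OF H] by blast
      have "gprod bp (x' j) (y i) \<ge> M + \<delta>" using h1 g2 c by linarith
      then have "gprod bp (x i) (y i) \<ge> M" using h2 g1 d0 by linarith
      then show False using i by linarith
    qed
  qed
  then show ?thesis by blast
qed

end


lemma ev_seq: "(\<exists>N. \<forall>i\<ge>N. P i) \<Longrightarrow> eventually P sequentially"
  using eventually_sequentially by blast

lemma seq_ev: "eventually P sequentially \<Longrightarrow> (\<exists>N. \<forall>i\<ge>N. P i)"
  using eventually_sequentially by blast

lemma liminf_ge_ev: "(\<exists>N. \<forall>i\<ge>N. L \<le> f i) \<Longrightarrow> ereal L \<le> liminf (\<lambda>i. ereal (f i))"
  by (rule Liminf_bounded) (use ev_seq in auto)

lemma limsup_le_ev: "(\<exists>N. \<forall>i\<ge>N. f i \<le> U) \<Longrightarrow> limsup (\<lambda>i. ereal (f i)) \<le> ereal U"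
  by (rule Limsup_bounded) (use ev_seq in auto)

lemma limsup_ge_ev: "(\<exists>N. \<forall>i\<ge>N. L \<le> f i) \<Longrightarrow> ereal L \<le> limsup (\<lambda>i. ereal (f i))"
  by (rule le_Limsup) (use ev_seq in auto)

lemma liminf_le_freq:
  assumes "\<forall>N. \<exists>i\<ge>N. f i < B"
  shows "liminf (\<lambda>i. ereal (f i)) \<le> ereal B"
proof (rule ccontr)
  assume "\<not> ?thesis"
  then have "ereal B < liminf (\<lambda>i. ereal (f i))" by simp
  then have "eventually (\<lambda>i. ereal B < ereal (f i)) sequentially"
    using le_Liminf_iff[of "liminf (\<lambda>i. ereal (f i))" sequentially "\<lambda>i. ereal (f i)"] by blast
  then obtain N where "\<forall>i\<ge>N. B < f i" using seq_ev by fastforce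
  then show False using assms by (meson not_less_iff_gr_or_eq)
qed

lemma liminf_lt_freq:
  assumes "liminf (\<lambda>i. ereal (f i)) < ereal M"
  shows "\<forall>N. \<exists>i\<ge>N. f i < M"
proof (rule ccontr)
  assume "\<not> ?thesis"
  then obtain N where "\<forall>i\<ge>N. M \<le> f i" by (meson not_less)
  then have "ereal M \<le> liminf (\<lambda>i. ereal (f i))" using liminf_ge_ev by blast
  then show False using assms by simp
qed

lemma limsup_lt_ev:
  assumes "limsup (\<lambda>i. ereal (f i)) < ereal M"
  shows "\<exists>N. \<forall>i\<ge>N. f i < M"
proof -
  have "eventually (\<lambda>i. ereal (f i) < ereal M) sequentially" using Limsup_lessD[OF assms] .
  then show ?thesis using seq_ev by fastforce
qed

lemma limsup_gt_freq:
  assumes "ereal M < limsup (\<lambda>i. ereal (f i))"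
  shows "\<forall>N. \<exists>i\<ge>N. f i > M"
proof (rule ccontr)
  assume "\<not> ?thesis"
  then obtain N where "\<forall>i\<ge>N. f i \<le> M" by (meson not_less)
  then have "limsup (\<lambda>i. ereal (f i)) \<le> ereal M" using limsup_le_ev by blast
  then show False using assms by simp
qed

lemma ereal_between:
  assumes "ereal L \<le> S" "S \<le> ereal U"
  shows "S = ereal (real_of_ereal S) \<and> L \<le> real_of_ereal S \<and> real_of_ereal S \<le> U"
  using assms by (cases S) auto

lemma sup_bounds:
  assumes ne: "\<exists>x. x \<in> A"
    and ev: "\<forall>x\<in>A. \<exists>N. \<forall>i\<ge>N. L \<le> F x i \<and> F x i \<le> U"
  shows "real_of_ereal (Sup {limsup (\<lambda>i. ereal (F x i)) | x. x \<in> A}) \<in> {L..U}"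
proof -
  let ?S = "{limsup (\<lambda>i. ereal (F x i)) | x. x \<in> A}"
  have each: "ereal L \<le> v \<and> v \<le> ereal U" if vS: "v \<in> ?S" for v
  proof -
    obtain x where x: "x \<in> A" "v = limsup (\<lambda>i. ereal (F x i))" using vS by blast
    obtain N where N: "\<forall>i\<ge>N. L \<le> F x i \<and> F x i \<le> U" using ev x by blast
    have "ereal L \<le> limsup (\<lambda>i. ereal (F x i))" by (rule limsup_ge_ev) (use N in blast)
    moreover have "limsup (\<lambda>i. ereal (F x i)) \<le> ereal U" by (rule limsup_le_ev) (use N in blast)
    ultimately show ?thesis using x by simp
  qed
  obtain x0 where "x0 \<in> A" using ne by blast
  then have "limsup (\<lambda>i. ereal (F x0 i)) \<in> ?S" by blast
  then have "ereal L \<le> Sup ?S" using each by (meson Sup_upper order_trans)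
  moreover have "Sup ?S \<le> ereal U" using each by (meson Sup_least)
  ultimately show ?thesis using ereal_between by auto
qed

lemma sup_info:
  assumes ne: "\<exists>x. x \<in> A"
    and bnd: "\<And>x i. \<bar>F x i\<bar> \<le> D"
    and s: "s = real_of_ereal (Sup {limsup (\<lambda>i. ereal (F x i)) | x. x \<in> A})"
  shows "-D \<le> s \<and> s \<le> D"
    and "\<forall>x\<in>A. \<exists>N. \<forall>i\<ge>N. F x i < s + 1"
    and "\<exists>x\<in>A. \<forall>N. \<exists>i\<ge>N. F x i > s - 1"
proof -
  let ?S = "{limsup (\<lambda>i. ereal (F x i)) | x. x \<in> A}"
  have each: "ereal (-D) \<le> v \<and> v \<le> ereal D" if vS: "v \<in> ?S" for v
  proof -
    obtain x where x: "x \<in> A" "v = limsup (\<lambda>i. ereal (F x i))" using vS by blast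
    have N: "\<forall>i\<ge>0. -D \<le> F x i \<and> F x i \<le> D"
    proof (intro allI impI)
      fix i :: nat
      show "-D \<le> F x i \<and> F x i \<le> D" using bnd[of x i] unfolding abs_le_iff by linarith
    qed
    have "ereal (-D) \<le> limsup (\<lambda>i. ereal (F x i))" by (rule limsup_ge_ev) (use N in blast)
    moreover have "limsup (\<lambda>i. ereal (F x i)) \<le> ereal D" by (rule limsup_le_ev) (use N in blast)
    ultimately show ?thesis using x by simp
  qed
  obtain x0 where "x0 \<in> A" using ne by blast
  then have "limsup (\<lambda>i. ereal (F x0 i)) \<in> ?S" by blast
  then have "ereal (-D) \<le> Sup ?S" using each by (meson Sup_upper order_trans)
  moreover have "Sup ?S \<le> ereal D" using each by (meson Sup_least)
  ultimately have SS: "Sup ?S = ereal s" "-D \<le> s" "s \<le> D" using ereal_between[of "-D" "Sup ?S" D] s by auto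
  then show "-D \<le> s \<and> s \<le> D" by simp
  show "\<forall>x\<in>A. \<exists>N. \<forall>i\<ge>N. F x i < s + 1"
  proof
    fix x assume "x \<in> A"
    then have "limsup (\<lambda>i. ereal (F x i)) \<le> Sup ?S" by (blast intro: Sup_upper)
    moreover have "ereal s < ereal (s + 1)" by simp
    ultimately have "limsup (\<lambda>i. ereal (F x i)) < ereal (s + 1)" using SS(1) by (metis order_le_less_trans)
    then show "\<exists>N. \<forall>i\<ge>N. F x i < s + 1" by (rule limsup_lt_ev)
  qed
  have "ereal (s - 1) < Sup ?S" using SS(1) by simp
  then obtain v where "v \<in> ?S" "ereal (s - 1) < v" using less_Sup_iff by blast
  then obtain x where "x \<in> A" "ereal (s - 1) < limsup (\<lambda>i. ereal (F x i))" by blast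
  then show "\<exists>x\<in>A. \<forall>N. \<exists>i\<ge>N. F x i > s - 1" using limsup_gt_freq by blast
qed

subsection \<open>Boundary Gromov product\<close>

lemma gbd_ge:
  assumes "\<forall>x\<in>a. \<forall>y\<in>b. \<exists>N. \<forall>i\<ge>N. L \<le> gprod bp (x i) (y i)"
  shows "ereal L \<le> gprod_bd bp a b"
  unfolding gprod_bd_def
proof (rule Inf_greatest)
  fix v assume "v \<in> {liminf (\<lambda>i. ereal (gprod bp (x i) (y i))) |x y. x \<in> a \<and> y \<in> b}"
  then obtain x y where xy: "x \<in> a" "y \<in> b" and v: "v = liminf (\<lambda>i. ereal (gprod bp (x i) (y i)))" by blast
  have "\<exists>N. \<forall>i\<ge>N. L \<le> gprod bp (x i) (y i)" using assms xy by blast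
  then show "ereal L \<le> v" unfolding v by (rule liminf_ge_ev)
qed

lemma gbd_nonneg: "0 \<le> gprod_bd bp a b"
proof -
  have "\<forall>x\<in>a. \<forall>y\<in>b. \<exists>N. \<forall>i\<ge>N. 0 \<le> gprod bp (x i) (y i)" using gprod_nonneg by blast
  then have "ereal 0 \<le> gprod_bd bp a b" by (rule gbd_ge)
  then show ?thesis by (simp add: zero_ereal_def)
qed

lemma gbd_lt_freq:
  assumes "gprod_bd bp a b < ereal M"
  shows "\<exists>x\<in>a. \<exists>y\<in>b. \<forall>N. \<exists>i\<ge>N. gprod bp (x i) (y i) < M"
proof -
  have "Inf {liminf (\<lambda>i. ereal (gprod bp (x i) (y i))) |x y. x \<in> a \<and> y \<in> b} < ereal M"
    using assms unfolding gprod_bd_def .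
  then obtain v where "v \<in> {liminf (\<lambda>i. ereal (gprod bp (x i) (y i))) |x y. x \<in> a \<and> y \<in> b}" "v < ereal M"
    unfolding Inf_less_iff by blast
  then obtain x y where xy: "x \<in> a" "y \<in> b" and l: "liminf (\<lambda>i. ereal (gprod bp (x i) (y i))) < ereal M" by blast
  show ?thesis using xy liminf_lt_freq[OF l] by blast
qed

lemma gbd_finite:
  fixes bp :: "'m::metric_space"
  assumes H: "hyp \<delta> TYPE('m::metric_space)"
    and a: "a \<in> gboundary bp" and b: "b \<in> gboundary bp" and ne: "a \<noteq> b"
  shows "gprod_bd bp a b = ereal (real_of_ereal (gprod_bd bp a b)) \<and> 0 \<le> real_of_ereal (gprod_bd bp a b)"
proof -
  obtain x where x: "x \<in> a" using bd_nonempty[OF a] by blast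
  obtain y where y: "y \<in> b" using bd_nonempty[OF b] by blast
  have "\<not> gromov_equiv bp x y" using equiv_same_point[OF H a b x y] ne by blast
  then obtain B where "\<not> (\<exists>N. \<forall>i\<ge>N. B \<le> gprod bp (x i) (y i))"
    unfolding gromov_equiv_def by blast
  then have "\<forall>N. \<exists>i\<ge>N. gprod bp (x i) (y i) < B" by (simp add: not_le)
  then have "liminf (\<lambda>i. ereal (gprod bp (x i) (y i))) \<le> ereal B" by (rule liminf_le_freq)
  moreover have "gprod_bd bp a b \<le> liminf (\<lambda>i. ereal (gprod bp (x i) (y i)))"
    unfolding gprod_bd_def by (rule Inf_lower) (use x y in blast)
  ultimately have "gprod_bd bp a b \<le> ereal B" by simp
  moreover have "ereal 0 \<le> gprod_bd bp a b" using gbd_nonneg by (simp add: zero_ereal_def)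
  ultimately show ?thesis using ereal_between[of 0 "gprod_bd bp a b" B] by simp
qed


subsection \<open>Isometries\<close>

lemma iso_gprod:
  assumes iso: "\<forall>x y. dist (\<psi> x) (\<psi> y) = dist x y" and inv: "\<psi> (\<psi>' w) = w"
  shows "gprod w (\<psi> x) (\<psi> y) = gprod (\<psi>' w) x y"
proof -
  have "dist (\<psi> x) w = dist x (\<psi>' w)" using iso inv by metis
  moreover have "dist (\<psi> y) w = dist y (\<psi>' w)" using iso inv by metis
  moreover have "dist (\<psi> x) (\<psi> y) = dist x y" using iso by blast
  ultimately show ?thesis unfolding gprod_def by simp
qed

lemma seq_shift: "gromov_seq q x \<Longrightarrow> gromov_seq w x"
  unfolding gromov_seq_def
proof (intro allI)
  fix B assume A: "\<forall>B. \<exists>N. \<forall>i\<ge>N. \<forall>j\<ge>N. B \<le> gprod q (x i) (x j)"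
  then obtain N where N: "\<forall>i\<ge>N. \<forall>j\<ge>N. B + dist w q \<le> gprod q (x i) (x j)" by blast
  have "\<forall>i\<ge>N. \<forall>j\<ge>N. B \<le> gprod w (x i) (x j)"
  proof (intro allI impI)
    fix i j assume "N \<le> i" "N \<le> j"
    then have "B + dist w q \<le> gprod q (x i) (x j)" using N by blast
    moreover have "\<bar>gprod q (x i) (x j) - gprod w (x i) (x j)\<bar> \<le> dist w q" by (rule gprod_shift)
    ultimately show "B \<le> gprod w (x i) (x j)" unfolding abs_le_iff by linarith
  qed
  then show "\<exists>N. \<forall>i\<ge>N. \<forall>j\<ge>N. B \<le> gprod w (x i) (x j)" by blast
qed

lemma equiv_shift: "gromov_equiv q x y \<Longrightarrow> gromov_equiv w x y"
  unfolding gromov_equiv_def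
proof (intro allI)
  fix B assume A: "\<forall>B. \<exists>N. \<forall>i\<ge>N. B \<le> gprod q (x i) (y i)"
  then obtain N where N: "\<forall>i\<ge>N. B + dist w q \<le> gprod q (x i) (y i)" by blast
  have "\<forall>i\<ge>N. B \<le> gprod w (x i) (y i)"
  proof (intro allI impI)
    fix i assume "N \<le> i"
    then have "B + dist w q \<le> gprod q (x i) (y i)" using N by blast
    moreover have "\<bar>gprod q (x i) (y i) - gprod w (x i) (y i)\<bar> \<le> dist w q" by (rule gprod_shift)
    ultimately show "B \<le> gprod w (x i) (y i)" unfolding abs_le_iff by linarith
  qed
  then show "\<exists>N. \<forall>i\<ge>N. B \<le> gprod w (x i) (y i)" by blast
qed

lemma iso_seq:
  assumes iso: "\<forall>x y. dist (\<psi> x) (\<psi> y) = dist x y" and inv: "\<psi> (\<psi>' bp) = bp"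
    and s: "gromov_seq bp x"
  shows "gromov_seq bp (\<psi> \<circ> x)"
proof -
  have "gromov_seq (\<psi>' bp) x" using seq_shift s by blast
  then show ?thesis unfolding gromov_seq_def comp_def iso_gprod[where \<psi>=\<psi> and \<psi>'=\<psi>' and w=bp, OF iso inv] .
qed

lemma iso_equiv:
  assumes iso: "\<forall>x y. dist (\<psi> x) (\<psi> y) = dist x y" and inv: "\<psi> (\<psi>' bp) = bp"
    and s: "gromov_equiv bp x y"
  shows "gromov_equiv bp (\<psi> \<circ> x) (\<psi> \<circ> y)"
proof -
  have "gromov_equiv (\<psi>' bp) x y" using equiv_shift s by blast
  then show ?thesis unfolding gromov_equiv_def comp_def iso_gprod[where \<psi>=\<psi> and \<psi>'=\<psi>' and w=bp, OF iso inv] .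
qed

lemma bd_act_cls:
  assumes iso: "\<forall>x y. dist (\<psi> x) (\<psi> y) = dist x y" and iso': "\<forall>x y. dist (\<psi>' x) (\<psi>' y) = dist x y"
    and i1: "\<forall>z. \<psi> (\<psi>' z) = z" and i2: "\<forall>z. \<psi>' (\<psi> z) = z"
  shows "(\<lambda>y. \<psi> \<circ> y) ` cls bp x = cls bp (\<psi> \<circ> x)"
proof
  have a1: "\<psi> (\<psi>' bp) = bp" using i1 by blast
  have a2: "\<psi>' (\<psi> bp) = bp" using i2 by blast
  show "(\<lambda>y. \<psi> \<circ> y) ` cls bp x \<subseteq> cls bp (\<psi> \<circ> x)"
  proof
    fix w assume "w \<in> (\<lambda>y. \<psi> \<circ> y) ` cls bp x"
    then obtain z where z: "z \<in> cls bp x" "w = \<psi> \<circ> z" by blast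
    then have "gromov_seq bp z" "gromov_equiv bp x z" unfolding cls_def by auto
    then have "gromov_seq bp (\<psi> \<circ> z)" "gromov_equiv bp (\<psi> \<circ> x) (\<psi> \<circ> z)"
      using iso_seq[where \<psi>=\<psi> and \<psi>'=\<psi>' and bp=bp, OF iso a1] iso_equiv[where \<psi>=\<psi> and \<psi>'=\<psi>' and bp=bp, OF iso a1] by blast+
    then show "w \<in> cls bp (\<psi> \<circ> x)" unfolding cls_def z(2) by blast
  qed
  show "cls bp (\<psi> \<circ> x) \<subseteq> (\<lambda>y. \<psi> \<circ> y) ` cls bp x"
  proof
    fix w assume "w \<in> cls bp (\<psi> \<circ> x)"
    then have w: "gromov_seq bp w" "gromov_equiv bp (\<psi> \<circ> x) w" unfolding cls_def by auto
    have c1: "\<psi>' \<circ> (\<psi> \<circ> x) = x" using i2 by (simp add: comp_def)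
    have c2: "\<psi> \<circ> (\<psi>' \<circ> w) = w" using i1 by (simp add: comp_def)
    have "gromov_seq bp (\<psi>' \<circ> w)" using iso_seq[where \<psi>=\<psi>' and \<psi>'=\<psi> and bp=bp, OF iso' a2] w(1) by blast
    moreover have "gromov_equiv bp (\<psi>' \<circ> (\<psi> \<circ> x)) (\<psi>' \<circ> w)" using iso_equiv[where \<psi>=\<psi>' and \<psi>'=\<psi> and bp=bp, OF iso' a2] w(2) by blast
    ultimately have "\<psi>' \<circ> w \<in> cls bp x" unfolding cls_def c1 by blast
    then show "w \<in> (\<lambda>y. \<psi> \<circ> y) ` cls bp x" using c2 by (metis image_eqI)
  qed
qed

lemma bd_act_bd:
  assumes iso: "\<forall>x y. dist (\<psi> x) (\<psi> y) = dist x y" and iso': "\<forall>x y. dist (\<psi>' x) (\<psi>' y) = dist x y"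
    and i1: "\<forall>z. \<psi> (\<psi>' z) = z" and i2: "\<forall>z. \<psi>' (\<psi> z) = z"
    and a: "a \<in> gboundary bp"
  shows "(\<lambda>y. \<psi> \<circ> y) ` a \<in> gboundary bp"
proof -
  obtain z where z: "gromov_seq bp z" "a = cls bp z" using bd_cases[OF a] by blast
  have "(\<lambda>y. \<psi> \<circ> y) ` a = cls bp (\<psi> \<circ> z)" using bd_act_cls[OF iso iso' i1 i2] z(2) by blast
  moreover have "gromov_seq bp (\<psi> \<circ> z)" using iso_seq[where \<psi>=\<psi> and \<psi>'=\<psi>' and bp=bp, OF iso] i1 z(1) by blast
  ultimately show ?thesis unfolding gboundary_cls by blast
qed

lemma act_facts:
  fixes G (structure)
  assumes grp: "group G" and ia: "isometric_action G \<phi>" and g: "g \<in> carrier G"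
  shows "\<forall>z. \<phi> g (\<phi> (inv g) z) = z" "\<forall>z. \<phi> (inv g) (\<phi> g z) = z"
    "\<forall>x y. dist (\<phi> g x) (\<phi> g y) = dist x y" "\<forall>x y. dist (\<phi> (inv g) x) (\<phi> (inv g) y) = dist x y"
proof -
  have ga: "group_action G UNIV \<phi>" and isom: "\<forall>g\<in>carrier G. \<forall>x y. dist (\<phi> g x) (\<phi> g y) = dist x y"
    using ia unfolding isometric_action_def by auto
  have ig: "inv g \<in> carrier G" using grp g by (simp add: group.inv_closed)
  have one: "\<phi> \<one> z = z" for z
    using group_action.id_eq_one[OF ga] by (metis UNIV_I restrict_apply')
  show "\<forall>z. \<phi> g (\<phi> (inv g) z) = z"
  proof
    fix z
    have "\<phi> (g \<otimes> inv g) z = \<phi> g (\<phi> (inv g) z)"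
      using group_action.composition_rule[OF ga, of z g "inv g"] g ig by simp
    moreover have "g \<otimes> inv g = \<one>" using grp g by (simp add: group.r_inv)
    ultimately show "\<phi> g (\<phi> (inv g) z) = z" using one by simp
  qed
  show "\<forall>z. \<phi> (inv g) (\<phi> g z) = z"
  proof
    fix z
    have "\<phi> (inv g \<otimes> g) z = \<phi> (inv g) (\<phi> g z)"
      using group_action.composition_rule[OF ga, of z "inv g" g] g ig by simp
    moreover have "inv g \<otimes> g = \<one>" using grp g by (simp add: group.l_inv)
    ultimately show "\<phi> (inv g) (\<phi> g z) = z" using one by simp
  qed
  show "\<forall>x y. dist (\<phi> g x) (\<phi> g y) = dist x y" using isom g by blast
  show "\<forall>x y. dist (\<phi> (inv g) x) (\<phi> (inv g) y) = dist x y" using isom ig by blast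
qed

subsection \<open>Compactness\<close>

lemma K_lower:
  assumes M: "Metric_space S d" and Ksub: "K \<subseteq> {(a,b). a \<in> S \<and> b \<in> S \<and> a \<noteq> b}"
    and cK: "compactin (prod_topology (Metric_space.mtopology S d) (Metric_space.mtopology S d)) K"
  shows "\<exists>\<epsilon>>0. \<forall>a b. (a,b) \<in> K \<longrightarrow> \<epsilon> \<le> d a b"
proof (cases "K = {}")
  case True
  then show ?thesis by (intro exI[of _ 1]) auto
next
  case False
  define m where "m = metric (S, d)"
  have mt: "mtopology_of m = Metric_space.mtopology S d" unfolding m_def using Metric_space.mtopology_of[OF M] .
  have md: "mdist m = d" unfolding m_def using Metric_space.mdist_metric[OF M] .
  have cont: "continuous_map (prod_topology (Metric_space.mtopology S d) (Metric_space.mtopology S d)) euclidean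
      (\<lambda>(x,y). d x y)" using continuous_map_metric[of m] unfolding mt md .
  have "compactin euclidean ((\<lambda>(x,y). d x y) ` K)" using image_compactin[OF cK cont] .
  then have cpt: "compact ((\<lambda>(x,y). d x y) ` K)" by simp
  have ne: "(\<lambda>(x,y). d x y) ` K \<noteq> {}" using False by blast
  obtain s where s: "s \<in> (\<lambda>(x,y). d x y) ` K" "\<forall>t\<in>(\<lambda>(x,y). d x y) ` K. s \<le> t"
    using compact_attains_inf[OF cpt ne] by blast
  obtain a0 b0 where ab: "(a0,b0) \<in> K" "s = d a0 b0" using s(1) by auto
  have "a0 \<in> S" "b0 \<in> S" "a0 \<noteq> b0" using ab Ksub by auto
  then have "0 < s" using ab(2) Metric_space.zero[OF M] Metric_space.nonneg[OF M] by (metis order_le_less)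
  moreover have "\<forall>a b. (a,b) \<in> K \<longrightarrow> s \<le> d a b" using s(2) by force
  ultimately show ?thesis by blast
qed


lemma K_gp:
  fixes bp :: "'m::metric_space"
  assumes H: "hyp \<delta> TYPE('m)" and vm: "visual_metric bp \<alpha> dB"
    and Ksub: "K \<subseteq> {(\<xi>, \<eta>). \<xi> \<in> gboundary bp \<and> \<eta> \<in> gboundary bp \<and> \<xi> \<noteq> \<eta>}"
    and cK: "compactin (prod_topology (Metric_space.mtopology (gboundary bp) dB)
                                   (Metric_space.mtopology (gboundary bp) dB)) K"
  shows "\<exists>R\<ge>0. \<forall>a b. (a,b) \<in> K \<longrightarrow> (\<forall>x\<in>a. \<forall>y\<in>b. \<exists>N. \<forall>i\<ge>N. gprod bp (x i) (y i) \<le> R)"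
proof -
  obtain bf Bb where al: "0 < \<alpha>" "\<alpha> < 1" and M: "Metric_space (gboundary bp) dB"
    and bb: "\<forall>\<xi>\<in>gboundary bp. \<forall>\<eta>\<in>gboundary bp. \<bar>bf \<xi> \<eta>\<bar> \<le> Bb"
    and vf: "\<forall>\<xi>\<in>gboundary bp. \<forall>\<eta>\<in>gboundary bp. \<xi> \<noteq> \<eta> \<longrightarrow>
           dB \<xi> \<eta> = \<alpha> powr (real_of_ereal (gprod_bd bp \<xi> \<eta>) + bf \<xi> \<eta>)"
    using vm unfolding visual_metric_def by (elim conjE exE) (rule that, assumption+)
  obtain \<epsilon> where ep: "\<epsilon> > 0" "\<forall>a b. (a,b) \<in> K \<longrightarrow> \<epsilon> \<le> dB a b"
    using K_lower[OF M Ksub cK] by blast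
  have lnal: "ln \<alpha> < 0" using al by simp
  define M0 where "M0 = ln \<epsilon> / ln \<alpha> + Bb + 1"
  define R where "R = max (M0 + 2 * \<delta>) 0"
  have "\<forall>a b. (a,b) \<in> K \<longrightarrow> (\<forall>x\<in>a. \<forall>y\<in>b. \<exists>N. \<forall>i\<ge>N. gprod bp (x i) (y i) \<le> R)"
  proof (intro allI impI ballI)
    fix a b x y assume ab: "(a,b) \<in> K" and x: "x \<in> a" and y: "y \<in> b"
    have a: "a \<in> gboundary bp" and b: "b \<in> gboundary bp" and ne: "a \<noteq> b" using ab Ksub by auto
    define r where "r = real_of_ereal (gprod_bd bp a b)"
    have fin: "gprod_bd bp a b = ereal r" using gbd_finite[OF H a b ne] unfolding r_def by blast
    have "dB a b = \<alpha> powr (r + bf a b)" using vf a b ne unfolding r_def by blast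
    moreover have "\<epsilon> \<le> dB a b" using ep(2) ab by blast
    ultimately have "\<epsilon> \<le> \<alpha> powr (r + bf a b)" by simp
    then have "ln \<epsilon> \<le> ln (\<alpha> powr (r + bf a b))" using ep(1) al ln_le_cancel_iff[of \<epsilon> "\<alpha> powr (r + bf a b)"] by simp
    then have "ln \<epsilon> \<le> (r + bf a b) * ln \<alpha>" by simp
    then have "r + bf a b \<le> ln \<epsilon> / ln \<alpha>" using lnal by (simp add: neg_le_divide_eq)
    moreover have "\<bar>bf a b\<bar> \<le> Bb" using bb a b by blast
    ultimately have "r < M0" unfolding M0_def abs_le_iff by linarith
    then have "gprod_bd bp a b < ereal M0" using fin by simp
    then have "\<exists>x\<in>a. \<exists>y\<in>b. \<forall>N. \<exists>i\<ge>N. gprod bp (x i) (y i) < M0" by (rule gbd_lt_freq)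
    then obtain x0 y0 where x0: "x0 \<in> a" and y0: "y0 \<in> b" and fr: "\<forall>N. \<exists>i\<ge>N. gprod bp (x0 i) (y0 i) < M0"
      by blast
    obtain N where N: "\<forall>j\<ge>N. gprod bp (x j) (y j) \<le> M0 + 2 * \<delta>"
      using transfer[OF H a b x0 x y0 y fr] by blast
    show "\<exists>N. \<forall>i\<ge>N. gprod bp (x i) (y i) \<le> R"
    proof (intro exI allI impI)
      fix i assume "N \<le> i"
      then have "gprod bp (x i) (y i) \<le> M0 + 2 * \<delta>" using N by blast
      moreover have "M0 + 2 * \<delta> \<le> R" unfolding R_def by simp
      ultimately show "gprod bp (x i) (y i) \<le> R" by linarith
    qed
  qed
  moreover have "R \<ge> 0" unfolding R_def by simp
  ultimately show ?thesis by blast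
qed

theorem mainTheorem8:
  fixes G :: "('g, 'z) monoid_scheme" (structure)
    and \<phi> :: "'g \<Rightarrow> 'm::metric_space \<Rightarrow> 'm"
    and bp :: 'm
    and \<alpha> :: real
    and dB :: "(nat \<Rightarrow> 'm) set \<Rightarrow> (nat \<Rightarrow> 'm) set \<Rightarrow> real"
  assumes "group G" and "countable (carrier G)"
    and "proper_space TYPE('m)" and "gromov_hyperbolic TYPE('m)" and "quasi_convex bp"
    and "isometric_action G \<phi>" and "properly_acting G \<phi>" and "cocompact_action G \<phi>"
    and "infinite (gboundary bp)"
    and "visual_metric bp \<alpha> dB"
  shows "\<forall>K. K \<subseteq> {(\<xi>, \<eta>). \<xi> \<in> gboundary bp \<and> \<eta> \<in> gboundary bp \<and> \<xi> \<noteq> \<eta>} \<and>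
          compactin (prod_topology (Metric_space.mtopology (gboundary bp) dB)
                                   (Metric_space.mtopology (gboundary bp) dB)) K \<longrightarrow>
        (\<exists>C::real. \<forall>\<xi> \<eta> \<eta>' g.
           g \<in> carrier G \<and> (\<xi>, \<eta>) \<in> K \<and> (\<xi>, \<eta>') \<in> K \<and>
           (bd_act \<phi> g \<xi>, bd_act \<phi> g \<eta>) \<in> K \<and> busemann G \<phi> bp g \<xi> < 0 \<longrightarrow>
           (let t = - busemann G \<phi> bp g \<xi> in
              busemann G \<phi> bp g \<eta> \<in> {t - C .. t + C} \<and>
              busemann G \<phi> bp g \<eta>' \<in> {t - C .. t + C} \<and>
              dB (bd_act \<phi> g \<eta>) (bd_act \<phi> g \<eta>') < \<alpha> powr (t - C)))"
  proof (intro allI impI)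
  fix K
  assume KK: "K \<subseteq> {(\<xi>, \<eta>). \<xi> \<in> gboundary bp \<and> \<eta> \<in> gboundary bp \<and> \<xi> \<noteq> \<eta>} \<and>
          compactin (prod_topology (Metric_space.mtopology (gboundary bp) dB)
                                   (Metric_space.mtopology (gboundary bp) dB)) K"
  then have Ksub: "K \<subseteq> {(\<xi>, \<eta>). \<xi> \<in> gboundary bp \<and> \<eta> \<in> gboundary bp \<and> \<xi> \<noteq> \<eta>}"
    and cK: "compactin (prod_topology (Metric_space.mtopology (gboundary bp) dB)
                                   (Metric_space.mtopology (gboundary bp) dB)) K" by auto
  obtain \<delta> where H: "hyp \<delta> TYPE('m)" using hyp_exists[OF assms(4)] by blast
  have d0: "0 \<le> \<delta>" using hyp_nonneg[OF H] .
  obtain R where R0: "R \<ge> 0"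
    and RK: "\<forall>a b. (a,b) \<in> K \<longrightarrow> (\<forall>x\<in>a. \<forall>y\<in>b. \<exists>N. \<forall>i\<ge>N. gprod bp (x i) (y i) \<le> R)"
    using K_gp[OF H assms(10) Ksub cK] by blast
  obtain bf Bb where al: "0 < \<alpha>" "\<alpha> < 1" and M: "Metric_space (gboundary bp) dB"
    and bb: "\<forall>\<xi>\<in>gboundary bp. \<forall>\<eta>\<in>gboundary bp. \<bar>bf \<xi> \<eta>\<bar> \<le> Bb"
    and vf: "\<forall>\<xi>\<in>gboundary bp. \<forall>\<eta>\<in>gboundary bp. \<xi> \<noteq> \<eta> \<longrightarrow>
           dB \<xi> \<eta> = \<alpha> powr (real_of_ereal (gprod_bd bp \<xi> \<eta>) + bf \<xi> \<eta>)"
    using assms(10) unfolding visual_metric_def by (elim conjE exE) (rule that, assumption+)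
  have Bb0: "0 \<le> Bb"
  proof -
    obtain \<xi>0 where "\<xi>0 \<in> gboundary bp" using assms(9) by (metis finite.emptyI ex_in_conv)
    then have "\<bar>bf \<xi>0 \<xi>0\<bar> \<le> Bb" using bb by blast
    then show ?thesis by linarith
  qed
  define D0 where "D0 = 2 * R + 2 * \<delta> + 2"
  define C where "C = 2 * D0 + 4 * R + 4 * \<delta> + Bb + 4"
  show "\<exists>C::real. \<forall>\<xi> \<eta> \<eta>' g.
           g \<in> carrier G \<and> (\<xi>, \<eta>) \<in> K \<and> (\<xi>, \<eta>') \<in> K \<and>
           (bd_act \<phi> g \<xi>, bd_act \<phi> g \<eta>) \<in> K \<and> busemann G \<phi> bp g \<xi> < 0 \<longrightarrow>
           (let t = - busemann G \<phi> bp g \<xi> in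
              busemann G \<phi> bp g \<eta> \<in> {t - C .. t + C} \<and>
              busemann G \<phi> bp g \<eta>' \<in> {t - C .. t + C} \<and>
              dB (bd_act \<phi> g \<eta>) (bd_act \<phi> g \<eta>') < \<alpha> powr (t - C))"
  proof (intro exI[of _ C] allI impI)
    fix \<xi> \<eta> \<eta>' g
    assume A: "g \<in> carrier G \<and> (\<xi>, \<eta>) \<in> K \<and> (\<xi>, \<eta>') \<in> K \<and>
           (bd_act \<phi> g \<xi>, bd_act \<phi> g \<eta>) \<in> K \<and> busemann G \<phi> bp g \<xi> < 0"
    then have g: "g \<in> carrier G" and K1: "(\<xi>, \<eta>) \<in> K" and K2: "(\<xi>, \<eta>') \<in> K"
      and K3: "(bd_act \<phi> g \<xi>, bd_act \<phi> g \<eta>) \<in> K" and neg: "busemann G \<phi> bp g \<xi> < 0" by auto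
    define p where "p = \<phi> (inv g) bp"
    define D where "D = dist bp p"
    define F where "F = (\<lambda>(x::nat \<Rightarrow> 'm) i. dist p (x i) - dist bp (x i))"
    have bus: "busemann G \<phi> bp g \<zeta> = real_of_ereal (Sup {limsup (\<lambda>i. ereal (F x i)) | x. x \<in> \<zeta>})" for \<zeta>
      unfolding busemann_def F_def p_def by simp
    have Fb: "\<And>x i. \<bar>F x i\<bar> \<le> D" unfolding F_def D_def by (rule f_abs)
    have Fid: "F x i = D - 2 * gprod bp p (x i)" for x i unfolding F_def D_def by (rule f_id)
    have Fbase: "2 * gprod p u v = 2 * gprod bp u v + (dist p u - dist bp u) + (dist p v - dist bp v)" for u v
      by (rule gprod_base_id)
    have af: "\<forall>z. \<phi> g (\<phi> (inv g) z) = z" "\<forall>z. \<phi> (inv g) (\<phi> g z) = z"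
      "\<forall>x y. dist (\<phi> g x) (\<phi> g y) = dist x y" "\<forall>x y. dist (\<phi> (inv g) x) (\<phi> (inv g) y) = dist x y"
      using act_facts[OF assms(1) assms(6) g] by blast+
    have gpact: "gprod bp (\<phi> g u) (\<phi> g v) = gprod p u v" for u v
      unfolding p_def by (rule iso_gprod) (use af in blast)+
    have bda: "bd_act \<phi> g \<zeta> = (\<lambda>y. \<phi> g \<circ> y) ` \<zeta>" for \<zeta> unfolding bd_act_def by simp
    have \<xi>b: "\<xi> \<in> gboundary bp" and \<eta>b: "\<eta> \<in> gboundary bp" and \<eta>'b: "\<eta>' \<in> gboundary bp"
      using K1 K2 Ksub by auto
    have g\<eta>'b: "bd_act \<phi> g \<eta>' \<in> gboundary bp"
      unfolding bda by (rule bd_act_bd[OF af(3) af(4) af(1) af(2) \<eta>'b])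
    define s where "s = busemann G \<phi> bp g \<xi>"
    define t where "t = - s"
    have ne\<xi>: "\<exists>x. x \<in> \<xi>" using bd_nonempty[OF \<xi>b] .
    have si: "-D \<le> s \<and> s \<le> D" "\<forall>x\<in>\<xi>. \<exists>N. \<forall>i\<ge>N. F x i < s + 1"
      "\<exists>x\<in>\<xi>. \<forall>N. \<exists>i\<ge>N. F x i > s - 1"
    proof -
      have sdef': "s = real_of_ereal (Sup {limsup (\<lambda>i. ereal (F x i)) | x. x \<in> \<xi>})"
        unfolding s_def bus by simp
      note S = sup_info[where A=\<xi> and F=F and D=D and s=s, OF ne\<xi> Fb sdef']
      show "-D \<le> s \<and> s \<le> D" by (rule S(1))
      show "\<forall>x\<in>\<xi>. \<exists>N. \<forall>i\<ge>N. F x i < s + 1" by (rule S(2))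
      show "\<exists>x\<in>\<xi>. \<forall>N. \<exists>i\<ge>N. F x i > s - 1" by (rule S(3))
    qed
    have t0: "0 < t" "t \<le> D" using si(1) neg unfolding t_def s_def by auto
    have FB: "\<forall>y\<in>\<zeta>. \<exists>N. \<forall>i\<ge>N. t - 2 * D0 \<le> F y i \<and> F y i \<le> t + C"
      if Z: "(\<xi>, \<zeta>) \<in> K" for \<zeta>
    proof (cases "D \<le> D0")
      case True
      show ?thesis
      proof (intro ballI exI allI impI)
        fix y and i :: nat
        have "\<bar>F y i\<bar> \<le> D" by (rule Fb)
        then have c3a: "F y i \<le> D" and c3b: "- F y i \<le> D" unfolding abs_le_iff by auto
        have "t - 2 * D0 \<le> - D" using True t0 by linarith
        then have L: "t - 2 * D0 \<le> F y i" using c3b by linarith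
        have U1: "F y i \<le> D0" using c3a True by linarith
        have U2: "D0 \<le> t + C" using t0 R0 d0 Bb0 unfolding C_def D0_def by (smt (verit))
        have U: "F y i \<le> t + C" using U1 U2 by linarith
        show "t - 2 * D0 \<le> F y i \<and> F y i \<le> t + C" using L U by blast
      qed
    next
      case False
      have key: "\<forall>y\<in>\<zeta>'. \<exists>N. \<forall>i\<ge>N. D - 2 * R - 2 * \<delta> \<le> F y i" if Z': "(\<xi>, \<zeta>') \<in> K" for \<zeta>'
      proof
        fix y assume y: "y \<in> \<zeta>'"
        obtain x where x: "x \<in> \<xi>" using ne\<xi> by blast
        obtain N1 where N1: "\<forall>i\<ge>N1. F x i < s + 1" using si(2) x by blast
        obtain N2 where N2: "\<forall>i\<ge>N2. gprod bp (x i) (y i) \<le> R" using RK Z' x y by blast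
        have "\<forall>i\<ge>max N1 N2. D - 2 * R - 2 * \<delta> \<le> F y i"
        proof (intro allI impI)
          fix i assume i: "max N1 N2 \<le> i"
          have a1: "F x i < s + 1" using N1 i by simp
          have a2: "gprod bp (x i) (y i) \<le> R" using N2 i by simp
          have a3: "gprod bp (x i) (y i) \<ge> min (gprod bp (x i) p) (gprod bp p (y i)) - \<delta>"
            using hypD[OF H] by blast
          have a4: "gprod bp (x i) p = gprod bp p (x i)" by (rule gprod_sym)
          have a5: "F x i = D - 2 * gprod bp p (x i)" by (rule Fid)
          have a6: "F y i = D - 2 * gprod bp p (y i)" by (rule Fid)
          have "gprod bp p (x i) > R + \<delta>" using a1 a5 si(1) False neg unfolding s_def D0_def by linarith
          then have "gprod bp p (y i) \<le> R + \<delta>" using a2 a3 a4 by linarith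
          then show "D - 2 * R - 2 * \<delta> \<le> F y i" using a6 by linarith
        qed
        then show "\<exists>N. \<forall>i\<ge>N. D - 2 * R - 2 * \<delta> \<le> F y i" by blast
      qed
      have Dbd: "D < t + 4 * R + 2 * \<delta> + 1"
      proof -
        obtain x where x: "x \<in> \<xi>" and fr: "\<forall>N. \<exists>i\<ge>N. F x i > s - 1" using si(3) by blast
        obtain y where y: "y \<in> \<eta>" using bd_nonempty[OF \<eta>b] by blast
        obtain N1 where N1: "\<forall>i\<ge>N1. D - 2 * R - 2 * \<delta> \<le> F y i" using key[OF K1] y by blast
        have gx: "\<phi> g \<circ> x \<in> bd_act \<phi> g \<xi>" unfolding bda using x by blast
        have gy: "\<phi> g \<circ> y \<in> bd_act \<phi> g \<eta>" unfolding bda using y by blast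
        obtain N2 where N2: "\<forall>i\<ge>N2. gprod bp ((\<phi> g \<circ> x) i) ((\<phi> g \<circ> y) i) \<le> R"
          using RK K3 gx gy by blast
        obtain i where i: "i \<ge> max N1 N2" "F x i > s - 1" using fr by blast
        have b1: "D - 2 * R - 2 * \<delta> \<le> F y i" using N1 i by simp
        have b2: "gprod p (x i) (y i) \<le> R" using N2 i gpact by simp
        have b3: "2 * gprod p (x i) (y i) = 2 * gprod bp (x i) (y i) + F x i + F y i"
          using Fbase unfolding F_def by simp
        have b4: "0 \<le> gprod bp (x i) (y i)" by (rule gprod_nonneg)
        show ?thesis using b1 b2 b3 b4 i(2) unfolding t_def by linarith
      qed
      show ?thesis
      proof
        fix y assume y: "y \<in> \<zeta>"
        obtain N where N: "\<forall>i\<ge>N. D - 2 * R - 2 * \<delta> \<le> F y i" using key[OF Z] y by blast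
        have "\<forall>i\<ge>N. t - 2 * D0 \<le> F y i \<and> F y i \<le> t + C"
        proof (intro allI impI)
          fix i assume "N \<le> i"
          then have c1: "D - 2 * R - 2 * \<delta> \<le> F y i" using N by blast
          have c2: "\<bar>F y i\<bar> \<le> D" by (rule Fb)
          have c3a: "F y i \<le> D" and c3b: "- F y i \<le> D" using c2 unfolding abs_le_iff by auto
          have "t - 2 * D0 \<le> F y i"
            using c1 c3a c3b Dbd t0 R0 d0 Bb0 unfolding C_def D0_def by (smt (verit))
          moreover have "F y i \<le> t + C"
            using c1 c3a c3b Dbd t0 R0 d0 Bb0 unfolding C_def D0_def by (smt (verit))
          ultimately show "t - 2 * D0 \<le> F y i \<and> F y i \<le> t + C" by blast
        qed
        then show "\<exists>N. \<forall>i\<ge>N. t - 2 * D0 \<le> F y i \<and> F y i \<le> t + C" by blast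
      qed
    qed
    have busb: "busemann G \<phi> bp g \<zeta> \<in> {t - C .. t + C}" if Z: "(\<xi>, \<zeta>) \<in> K" for \<zeta>
    proof -
      have Zb: "\<zeta> \<in> gboundary bp" using Z Ksub by auto
      have ev: "\<forall>y\<in>\<zeta>. \<exists>N. \<forall>i\<ge>N. t - C \<le> F y i \<and> F y i \<le> t + C"
      proof
        fix y assume "y \<in> \<zeta>"
        then obtain N where N: "\<forall>i\<ge>N. t - 2 * D0 \<le> F y i \<and> F y i \<le> t + C" using FB[OF Z] by blast
        have "t - C \<le> t - 2 * D0" using R0 d0 Bb0 unfolding C_def D0_def by (smt (verit))
        then show "\<exists>N. \<forall>i\<ge>N. t - C \<le> F y i \<and> F y i \<le> t + C" using N by force
      qed
      show ?thesis unfolding bus by (rule sup_bounds[OF bd_nonempty[OF Zb] ev])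
    qed
    have dist: "dB (bd_act \<phi> g \<eta>) (bd_act \<phi> g \<eta>') < \<alpha> powr (t - C)"
    proof (cases "bd_act \<phi> g \<eta> = bd_act \<phi> g \<eta>'")
      case True
      have g\<eta>b: "bd_act \<phi> g \<eta> \<in> gboundary bp" using K3 Ksub by auto
      have "dB (bd_act \<phi> g \<eta>) (bd_act \<phi> g \<eta>') = 0"
        using Metric_space.zero[OF M g\<eta>b g\<eta>b] True by simp
      moreover have "0 < \<alpha> powr (t - C)" using al by simp
      ultimately show ?thesis by simp
    next
      case False
      have g\<eta>b: "bd_act \<phi> g \<eta> \<in> gboundary bp" using K3 Ksub by auto
      define r where "r = real_of_ereal (gprod_bd bp (bd_act \<phi> g \<eta>) (bd_act \<phi> g \<eta>'))"
      have fin: "gprod_bd bp (bd_act \<phi> g \<eta>) (bd_act \<phi> g \<eta>') = ereal r"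
        using gbd_finite[OF H g\<eta>b g\<eta>'b False] unfolding r_def by blast
      have lb: "\<forall>z\<in>bd_act \<phi> g \<eta>. \<forall>w\<in>bd_act \<phi> g \<eta>'. \<exists>N. \<forall>i\<ge>N. t - 2 * D0 \<le> gprod bp (z i) (w i)"
      proof (intro ballI)
        fix z w assume z: "z \<in> bd_act \<phi> g \<eta>" and w: "w \<in> bd_act \<phi> g \<eta>'"
        obtain y where y: "y \<in> \<eta>" "z = \<phi> g \<circ> y" using z unfolding bda by blast
        obtain y' where y': "y' \<in> \<eta>'" "w = \<phi> g \<circ> y'" using w unfolding bda by blast
        obtain N1 where N1: "\<forall>i\<ge>N1. t - 2 * D0 \<le> F y i \<and> F y i \<le> t + C" using FB[OF K1] y by blast
        obtain N2 where N2: "\<forall>i\<ge>N2. t - 2 * D0 \<le> F y' i \<and> F y' i \<le> t + C" using FB[OF K2] y' by blast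
        have "\<forall>i\<ge>max N1 N2. t - 2 * D0 \<le> gprod bp (z i) (w i)"
        proof (intro allI impI)
          fix i assume i: "max N1 N2 \<le> i"
          have e1: "gprod bp (z i) (w i) = gprod p (y i) (y' i)" using y(2) y'(2) gpact by simp
          have e2: "2 * gprod p (y i) (y' i) = 2 * gprod bp (y i) (y' i) + F y i + F y' i"
            using Fbase unfolding F_def by simp
          have e3: "0 \<le> gprod bp (y i) (y' i)" by (rule gprod_nonneg)
          have "t - 2 * D0 \<le> F y i" "t - 2 * D0 \<le> F y' i" using N1 N2 i by auto
          then show "t - 2 * D0 \<le> gprod bp (z i) (w i)" using e1 e2 e3 by linarith
        qed
        then show "\<exists>N. \<forall>i\<ge>N. t - 2 * D0 \<le> gprod bp (z i) (w i)" by blast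
      qed
      have "ereal (t - 2 * D0) \<le> ereal r" using gbd_ge[OF lb] fin by simp
      then have rlb: "t - 2 * D0 \<le> r" by simp
      have "dB (bd_act \<phi> g \<eta>) (bd_act \<phi> g \<eta>') = \<alpha> powr (r + bf (bd_act \<phi> g \<eta>) (bd_act \<phi> g \<eta>'))"
        using vf g\<eta>b g\<eta>'b False unfolding r_def by blast
      moreover have "\<bar>bf (bd_act \<phi> g \<eta>) (bd_act \<phi> g \<eta>')\<bar> \<le> Bb" using bb g\<eta>b g\<eta>'b by blast
      moreover have "t - C < r + bf (bd_act \<phi> g \<eta>) (bd_act \<phi> g \<eta>') \<Longrightarrow>
          \<alpha> powr (r + bf (bd_act \<phi> g \<eta>) (bd_act \<phi> g \<eta>')) < \<alpha> powr (t - C)"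
        using powr_less_mono'[OF al] by blast
      ultimately show ?thesis using rlb R0 d0 unfolding C_def D0_def abs_le_iff by linarith
    qed
    show "let t = - busemann G \<phi> bp g \<xi> in
              busemann G \<phi> bp g \<eta> \<in> {t - C .. t + C} \<and>
              busemann G \<phi> bp g \<eta>' \<in> {t - C .. t + C} \<and>
              dB (bd_act \<phi> g \<eta>) (bd_act \<phi> g \<eta>') < \<alpha> powr (t - C)"
      unfolding Let_def using busb[OF K1] busb[OF K2] dist unfolding t_def s_def by blast
  qed
qed

end
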